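(* Each of $\Upsilon=\pi,\theta,\theta_B,\theta_{AB},\Psi$ satisfies the separation property on the class of all tree-child phylogenetic networks (labeled in a fixed finite set $S$) in which no pair of parents of a hybrid node is connected by a path: for any two such networks $N_1,N_2$, if $\Upsilon(N_1)=\Upsilon(N_2)$ then $N_1\cong N_2$.
   Context: A DAG $N=(V,E)$ is labeled in $S$ if its leaves (out-degree 0) are bijectively labeled by $S$; $\cong$ means isomorphism of directed graphs preserving leaf labels. A tree node has in-degree at most 1; a hybrid node has in-degree greater than 1; a tree child is a child that is a tree node. A tree-child phylogenetic network is a rooted DAG labeled in $S$ in which every non-leaf node has at least one tree child, no tree node has out-degree 1, and every hybrid node has out-degree exactly 1. "No pair of parents of a hybrid node is connected by a path": if $u_1,u_2$ are parents of a hybrid node, there is no path $u_1\rightsquigarrow u_2$ nor $u_2\rightsquigarrow u_1$. For a node $v$: $C(v)$ is the set of descendant leaves; $A(v)$ the set of leaves $s$ such that every path from the root to $s$ contains $v$; $B(v)=C(v)\setminus A(v)$. For an arc $e=(u,v)$: $\pi(e)=(C(v),S\setminus C(v))$; $\theta(e)=(A(v),B(v),S\setminus C(v))$; $\theta_B(e)$ is $\theta(e)$ with each $s\in B(v)$ weighted by the maximum number of hybrid nodes on a path from $v$ to $s$ (including $v$ and $s$); $\theta_{AB}(e)$ is $\theta(e)$ with each $s\in A(v)\cup B(v)$ so weighted. An arc is a tree arc if its head is a tree node and a network arc otherwise; for a hybrid node $v$, $RS(v)=\{C(u)\mid u\text{ a parent of }v\}$; $\Psi(e)=\theta_{AB}(e)$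 for a tree arc, $\Psi(e)=(\theta(e),RS(v))$ for a network arc with head $v$. For each $\Upsilon$, $\Upsilon(N)=\{\Upsilon(e)\mid e\in E\}$. *)

theory Defs
  imports Main
begin

text \<open>A (candidate) network: a set of nodes, a set of arcs, and a labelling of nodes
(only the labels of leaves matter).\<close>
record ('v, 's) network =
  nodes :: "'v set"
  arcs  :: "('v \<times> 'v) set"
  lbl   :: "'v \<Rightarrow> 's"

definition parents :: "('v, 's) network \<Rightarrow> 'v \<Rightarrow> 'v set" where
  "parents N v = {u. (u, v) \<in> arcs N}"

definition children :: "('v, 's) network \<Rightarrow> 'v \<Rightarrow> 'v set" where
  "children N v = {w. (v, w) \<in> arcs N}"

definition indeg :: "('v, 's) network \<Rightarrow> 'v \<Rightarrow> nat" where
  "indeg N v = card (parents N v)"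

definition outdeg :: "('v, 's) network \<Rightarrow> 'v \<Rightarrow> nat" where
  "outdeg N v = card (children N v)"

definition leaves :: "('v, 's) network \<Rightarrow> 'v set" where
  "leaves N = {v \<in> nodes N. outdeg N v = 0}"

definition is_tree_node :: "('v, 's) network \<Rightarrow> 'v \<Rightarrow> bool" where
  "is_tree_node N v \<longleftrightarrow> v \<in> nodes N \<and> indeg N v \<le> 1"

definition is_hybrid :: "('v, 's) network \<Rightarrow> 'v \<Rightarrow> bool" where
  "is_hybrid N v \<longleftrightarrow> v \<in> nodes N \<and> indeg N v > 1"

definition is_dag :: "('v, 's) network \<Rightarrow> bool" where
  "is_dag N \<longleftrightarrow> finite (nodes N) \<and> arcs N \<subseteq> nodes N \<times> nodes N \<and> acyclic (arcs N)"

definition is_root :: "('v, 's) network \<Rightarrow> 'v \<Rightarrow> bool" where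
  "is_root N r \<longleftrightarrow> r \<in> nodes N \<and> indeg N r = 0"

definition rooted :: "('v, 's) network \<Rightarrow> bool" where
  "rooted N \<longleftrightarrow> (\<exists>!r. is_root N r)"

definition root :: "('v, 's) network \<Rightarrow> 'v" where
  "root N = (THE r. is_root N r)"

definition labeled_in :: "'s set \<Rightarrow> ('v, 's) network \<Rightarrow> bool" where
  "labeled_in S N \<longleftrightarrow> bij_betw (lbl N) (leaves N) S"

definition tree_child_network :: "'s set \<Rightarrow> ('v, 's) network \<Rightarrow> bool" where
  "tree_child_network S N \<longleftrightarrow>
     is_dag N \<and> rooted N \<and> labeled_in S N \<and>
     (\<forall>v \<in> nodes N. v \<notin> leaves N \<longrightarrow> (\<exists>c \<in> children N v. is_tree_node N c)) \<and>
     (\<forall>v. is_tree_node N v \<longrightarrow> outdeg N v \<noteq> 1) \<and>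
     (\<forall>v. is_hybrid N v \<longrightarrow> outdeg N v = 1)"

definition no_parent_paths :: "('v, 's) network \<Rightarrow> bool" where
  "no_parent_paths N \<longleftrightarrow>
     (\<forall>h u1 u2. is_hybrid N h \<and> u1 \<in> parents N h \<and> u2 \<in> parents N h \<and> u1 \<noteq> u2
        \<longrightarrow> (u1, u2) \<notin> (arcs N)\<^sup>+)"

definition net_iso :: "('v, 's) network \<Rightarrow> ('w, 's) network \<Rightarrow> bool" where
  "net_iso N1 N2 \<longleftrightarrow> (\<exists>f. bij_betw f (nodes N1) (nodes N2) \<and>
     (\<forall>u \<in> nodes N1. \<forall>w \<in> nodes N1. (u, w) \<in> arcs N1 \<longleftrightarrow> (f u, f w) \<in> arcs N2) \<and>
     (\<forall>x \<in> leaves N1. lbl N2 (f x) = lbl N1 x))"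

definition is_path :: "('v, 's) network \<Rightarrow> 'v list \<Rightarrow> bool" where
  "is_path N p \<longleftrightarrow> p \<noteq> [] \<and> set p \<subseteq> nodes N \<and>
     (\<forall>i. Suc i < length p \<longrightarrow> (p ! i, p ! Suc i) \<in> arcs N)"

definition path_from_to :: "('v, 's) network \<Rightarrow> 'v list \<Rightarrow> 'v \<Rightarrow> 'v \<Rightarrow> bool" where
  "path_from_to N p u w \<longleftrightarrow> is_path N p \<and> hd p = u \<and> last p = w"

definition Cl :: "('v, 's) network \<Rightarrow> 'v \<Rightarrow> 's set" where
  "Cl N v = lbl N ` {x \<in> leaves N. (v, x) \<in> (arcs N)\<^sup>*}"

definition Al :: "('v, 's) network \<Rightarrow> 'v \<Rightarrow> 's set" where
  "Al N v = lbl N ` {x \<in> leaves N. \<forall>p. path_from_to N p (root N) x \<longrightarrow> v \<in> set p}"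

definition Bl :: "('v, 's) network \<Rightarrow> 'v \<Rightarrow> 's set" where
  "Bl N v = Cl N v - Al N v"

definition hweight :: "('v, 's) network \<Rightarrow> 'v \<Rightarrow> 'v \<Rightarrow> nat" where
  "hweight N v x = Max {length (filter (is_hybrid N) p) | p. path_from_to N p v x}"

definition weighted :: "('v, 's) network \<Rightarrow> 'v \<Rightarrow> 's set \<Rightarrow> ('s \<times> nat) set" where
  "weighted N v T = {(lbl N x, hweight N v x) | x. x \<in> leaves N \<and> lbl N x \<in> T}"

definition pi_arc :: "'s set \<Rightarrow> ('v, 's) network \<Rightarrow> 'v \<times> 'v \<Rightarrow> 's set \<times> 's set" where
  "pi_arc S N e = (Cl N (snd e), S - Cl N (snd e))"

definition theta_arc :: "'s set \<Rightarrow> ('v, 's) network \<Rightarrow> 'v \<times> 'v \<Rightarrow> 's set \<times> 's set \<times> 's set" where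
  "theta_arc S N e = (Al N (snd e), Bl N (snd e), S - Cl N (snd e))"

definition thetaB_arc :: "'s set \<Rightarrow> ('v, 's) network \<Rightarrow> 'v \<times> 'v \<Rightarrow> 's set \<times> ('s \<times> nat) set \<times> 's set" where
  "thetaB_arc S N e = (Al N (snd e), weighted N (snd e) (Bl N (snd e)), S - Cl N (snd e))"

definition thetaAB_arc :: "'s set \<Rightarrow> ('v, 's) network \<Rightarrow> 'v \<times> 'v \<Rightarrow> ('s \<times> nat) set \<times> ('s \<times> nat) set \<times> 's set" where
  "thetaAB_arc S N e = (weighted N (snd e) (Al N (snd e)), weighted N (snd e) (Bl N (snd e)),
                        S - Cl N (snd e))"

definition RS :: "('v, 's) network \<Rightarrow> 'v \<Rightarrow> 's set set" where
  "RS N v = Cl N ` parents N v"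

definition Psi_arc :: "'s set \<Rightarrow> ('v, 's) network \<Rightarrow> 'v \<times> 'v \<Rightarrow>
    (('s \<times> nat) set \<times> ('s \<times> nat) set \<times> 's set) + (('s set \<times> 's set \<times> 's set) \<times> 's set set)" where
  "Psi_arc S N e = (if is_tree_node N (snd e) then Inl (thetaAB_arc S N e)
                    else Inr (theta_arc S N e, RS N (snd e)))"

definition arc_invariant :: "(('v \<times> 'v) \<Rightarrow> 'a) \<Rightarrow> ('v, 's) network \<Rightarrow> 'a set" where
  "arc_invariant f N = f ` arcs N"

end

theory Submission
  imports Defs
begin


locale tcn =
  fixes S :: "'s set" and N :: "('v, 's) network"
  assumes tc: "tree_child_network S N" and npp: "no_parent_paths N"
begin

lemma finV: "finite (nodes N)" and arcsub: "arcs N \<subseteq> nodes N \<times> nodes N"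
  and acyc: "acyclic (arcs N)"
  using tc by (auto simp: tree_child_network_def is_dag_def)

lemma finE: "finite (arcs N)"
  using finV arcsub finite_subset by blast

lemma arc_nodes: "(u, v) \<in> arcs N \<Longrightarrow> u \<in> nodes N \<and> v \<in> nodes N"
  using arcsub by auto

lemma trancl_nodes: "(u, v) \<in> (arcs N)\<^sup>+ \<Longrightarrow> u \<in> nodes N \<and> v \<in> nodes N"
  using trancl_subset_Sigma[OF arcsub] by auto

lemma trancl_neq: "(u, v) \<in> (arcs N)\<^sup>+ \<Longrightarrow> u \<noteq> v"
  using acyc unfolding acyclic_def by auto

lemma fin_parents: "finite (parents N v)"
  using finV arcsub unfolding parents_def by (auto intro: finite_subset)

lemma fin_children: "finite (children N v)"
  using finV arcsub unfolding children_def by (auto intro: finite_subset)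

lemma tree_parent:
  assumes "is_tree_node N c" "(p, c) \<in> arcs N" "(q, c) \<in> arcs N" shows "p = q"
proof -
  have "card (parents N c) \<le> Suc 0" using assms(1) by (simp add: is_tree_node_def indeg_def)
  then show ?thesis using card_le_Suc0_iff_eq[OF fin_parents] assms(2,3)
    by (auto simp: parents_def)
qed

lemma two_parents_hybrid:
  assumes "(p, c) \<in> arcs N" "(q, c) \<in> arcs N" "p \<noteq> q" shows "is_hybrid N c"
proof -
  have "\<not> card (parents N c) \<le> Suc 0" using card_le_Suc0_iff_eq[OF fin_parents] assms
    by (auto simp: parents_def)
  then show ?thesis using assms arc_nodes by (auto simp: is_hybrid_def indeg_def)
qed

lemma tree_or_hybrid: "v \<in> nodes N \<Longrightarrow> is_tree_node N v \<or> is_hybrid N v"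
  by (auto simp: is_tree_node_def is_hybrid_def)

lemma tree_not_hybrid: "is_tree_node N v \<Longrightarrow> \<not> is_hybrid N v"
  by (auto simp: is_tree_node_def is_hybrid_def)

lemma leaf_iff: "v \<in> leaves N \<longleftrightarrow> v \<in> nodes N \<and> (\<forall>w. (v, w) \<notin> arcs N)"
  using fin_children by (auto simp: leaves_def outdeg_def children_def)

lemma hyb_child:
  assumes "is_hybrid N h" shows "\<exists>c. children N h = {c} \<and> is_tree_node N c"
proof -
  have o: "outdeg N h = 1" using tc assms by (auto simp: tree_child_network_def)
  then obtain c where c: "children N h = {c}" unfolding outdeg_def by (auto simp: card_Suc_eq)
  have "h \<notin> leaves N" using o by (auto simp: leaves_def)
  then have "\<exists>c' \<in> children N h. is_tree_node N c'"
    using tc assms by (auto simp: tree_child_network_def is_hybrid_def)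
  then show ?thesis using c by auto
qed

lemma hyb_child_tree: "is_hybrid N h \<Longrightarrow> (h, c) \<in> arcs N \<Longrightarrow> is_tree_node N c"
proof -
  assume a: "is_hybrid N h" "(h, c) \<in> arcs N"
  obtain d where "children N h = {d}" "is_tree_node N d" using hyb_child[OF a(1)] by auto
  then show ?thesis using a(2) by (auto simp: children_def)
qed

lemma hyb_child_unique: "is_hybrid N h \<Longrightarrow> (h, c) \<in> arcs N \<Longrightarrow> (h, d) \<in> arcs N \<Longrightarrow> c = d"
proof -
  assume a: "is_hybrid N h" "(h, c) \<in> arcs N" "(h, d) \<in> arcs N"
  obtain e where "children N h = {e}" using hyb_child[OF a(1)] by auto
  then have "c \<in> {e}" "d \<in> {e}" using a(2,3) unfolding children_def by blast+
  then show ?thesis by simp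
qed

lemma npp':
  assumes "(u1, h) \<in> arcs N" "(u2, h) \<in> arcs N" "(u1, u2) \<in> (arcs N)\<^sup>+" shows False
proof -
  have "u1 \<noteq> u2" using trancl_neq assms(3) by auto
  then have "is_hybrid N h" using two_parents_hybrid assms by auto
  then show False using npp assms \<open>u1 \<noteq> u2\<close> by (auto simp: no_parent_paths_def parents_def)
qed

lemma tree_two_children:
  assumes "is_tree_node N u" "(u, c) \<in> arcs N" shows "\<exists>c2. (u, c2) \<in> arcs N \<and> c2 \<noteq> c"
proof -
  have "outdeg N u \<noteq> 1" using tc assms by (auto simp: tree_child_network_def)
  moreover have "outdeg N u \<noteq> 0" using assms fin_children by (auto simp: outdeg_def children_def)
  ultimately have "children N u \<noteq> {c}" by (auto simp: outdeg_def)
  then show ?thesis using assms by (auto simp: children_def)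
qed

lemma is_root_root: "is_root N (root N)"
  using tc unfolding tree_child_network_def rooted_def root_def by (auto intro: theI')

lemma root_unique: "is_root N r \<Longrightarrow> r = root N"
  using tc is_root_root unfolding tree_child_network_def rooted_def by auto

lemma root_in: "root N \<in> nodes N"
  using is_root_root by (simp add: is_root_def)

lemma has_parent: "v \<in> nodes N \<Longrightarrow> v \<noteq> root N \<Longrightarrow> \<exists>p. (p, v) \<in> arcs N"
proof (rule ccontr)
  assume "v \<in> nodes N" "v \<noteq> root N" "\<not> (\<exists>p. (p, v) \<in> arcs N)"
  then have "is_root N v" by (auto simp: is_root_def indeg_def parents_def)
  then show False using root_unique \<open>v \<noteq> root N\<close> by auto
qed

lemma root_reach: "v \<in> nodes N \<Longrightarrow> (root N, v) \<in> (arcs N)\<^sup>*"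
proof (induction v rule: wf_induct_rule[OF finite_acyclic_wf[OF finE acyc]])
  case (1 v)
  show ?case
  proof (cases "v = root N")
    case False
    then obtain p where "(p, v) \<in> arcs N" using has_parent 1 by auto
    then show ?thesis using 1 arc_nodes by (meson rtrancl_into_rtrancl)
  qed simp
qed

lemma nodes_eq: "nodes N = insert (root N) (snd ` arcs N)"
  using root_in has_parent arc_nodes by force

end

context tcn begin

lemma lbl_leaves: "lbl N ` leaves N = S" and lbl_inj: "inj_on (lbl N) (leaves N)"
  using tc by (auto simp: tree_child_network_def labeled_in_def bij_betw_def)

lemma Cl_mono: "(u, v) \<in> (arcs N)\<^sup>* \<Longrightarrow> Cl N v \<subseteq> Cl N u"
  unfolding Cl_def by (auto intro: rtrancl_trans)

lemma Cl_sub: "Cl N v \<subseteq> S"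
  using lbl_leaves unfolding Cl_def by auto

lemma leaf_lbl: "x \<in> leaves N \<Longrightarrow> lbl N x \<in> Cl N u \<Longrightarrow> (u, x) \<in> (arcs N)\<^sup>*"
  unfolding Cl_def using lbl_inj by (auto dest: inj_onD)

lemma leaf_in_Cl: "x \<in> leaves N \<Longrightarrow> (u, x) \<in> (arcs N)\<^sup>* \<Longrightarrow> lbl N x \<in> Cl N u"
  unfolding Cl_def by auto

lemma Cl_leaf: "x \<in> leaves N \<Longrightarrow> Cl N x = {lbl N x}"
proof -
  assume x: "x \<in> leaves N"
  have "(x, y) \<in> (arcs N)\<^sup>* \<Longrightarrow> y = x" for y
    using x by (auto simp: leaf_iff elim: converse_rtranclE)
  then show ?thesis using x unfolding Cl_def by auto
qed

lemma Cl_root: "Cl N (root N) = S"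
proof -
  have "x \<in> leaves N \<Longrightarrow> (root N, x) \<in> (arcs N)\<^sup>*" for x
    using root_reach by (auto simp: leaves_def)
  then show ?thesis using lbl_leaves unfolding Cl_def by auto
qed

lemma TP: "v \<in> nodes N \<Longrightarrow> \<exists>x \<in> leaves N. (v, x) \<in> (arcs N)\<^sup>* \<and>
   (\<forall>u. (u, x) \<in> (arcs N)\<^sup>* \<longrightarrow> (u, v) \<in> (arcs N)\<^sup>* \<or> (v, u) \<in> (arcs N)\<^sup>*)"
proof (induction v rule: wf_induct_rule[OF finite_acyclic_wf_converse[OF finE acyc]])
  case (1 v)
  show ?case
  proof (cases "v \<in> leaves N")
    case True
    then show ?thesis by auto
  next
    case False
    then obtain c where c: "(v, c) \<in> arcs N" "is_tree_node N c"
      using tc 1(2) by (auto simp: tree_child_network_def children_def)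
    then have "c \<in> nodes N" using arc_nodes by auto
    then obtain x where x: "x \<in> leaves N" "(c, x) \<in> (arcs N)\<^sup>*"
      "\<forall>u. (u, x) \<in> (arcs N)\<^sup>* \<longrightarrow> (u, c) \<in> (arcs N)\<^sup>* \<or> (c, u) \<in> (arcs N)\<^sup>*"
      using 1(1) c by auto
    have "(u, v) \<in> (arcs N)\<^sup>* \<or> (v, u) \<in> (arcs N)\<^sup>*" if u: "(u, x) \<in> (arcs N)\<^sup>*" for u
    proof -
      have "(u, c) \<in> (arcs N)\<^sup>* \<or> (c, u) \<in> (arcs N)\<^sup>*" using x(3) u by auto
      then show ?thesis
      proof
        assume "(u, c) \<in> (arcs N)\<^sup>*"
        then have "u = c \<or> (u, c) \<in> (arcs N)\<^sup>+" using rtranclD by metis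
        then show ?thesis
        proof
          assume "(u, c) \<in> (arcs N)\<^sup>+"
          then obtain p where "(u, p) \<in> (arcs N)\<^sup>*" "(p, c) \<in> arcs N" using tranclD2 by metis
          then show ?thesis using tree_parent[OF c(2) _ c(1)] by auto
        qed (use c in auto)
      next
        assume "(c, u) \<in> (arcs N)\<^sup>*"
        then show ?thesis using c(1) by (meson converse_rtrancl_into_rtrancl)
      qed
    qed
    then show ?thesis using x c(1) by (meson converse_rtrancl_into_rtrancl)
  qed
qed

lemma comparable:
  assumes "a \<in> nodes N" "Cl N a \<subseteq> Cl N b"
  shows "(b, a) \<in> (arcs N)\<^sup>* \<or> (a, b) \<in> (arcs N)\<^sup>*"
proof -
  obtain x where x: "x \<in> leaves N" "(a, x) \<in> (arcs N)\<^sup>*"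
      "\<forall>u. (u, x) \<in> (arcs N)\<^sup>* \<longrightarrow> (u, a) \<in> (arcs N)\<^sup>* \<or> (a, u) \<in> (arcs N)\<^sup>*"
    using TP[OF assms(1)] by auto
  have "lbl N x \<in> Cl N b" using leaf_in_Cl[OF x(1,2)] assms(2) by auto
  then have "(b, x) \<in> (arcs N)\<^sup>*" using leaf_lbl x(1) by auto
  then show ?thesis using x(3) by auto
qed

lemma G_tree:
  assumes "is_tree_node N u" "(u, v) \<in> (arcs N)\<^sup>+" "Cl N u \<subseteq> Cl N v" shows False
proof -
  obtain c where c: "(u, c) \<in> arcs N" "(c, v) \<in> (arcs N)\<^sup>*" using tranclD assms(2) by metis
  obtain c2 where c2: "(u, c2) \<in> arcs N" "c2 \<noteq> c" using tree_two_children[OF assms(1) c(1)] by auto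
  have "c2 \<in> nodes N" using c2 arc_nodes by auto
  have "Cl N c2 \<subseteq> Cl N c"
    using Cl_mono[of u c2] Cl_mono[OF c(2)] assms(3) c2(1) by auto
  then have "(c, c2) \<in> (arcs N)\<^sup>* \<or> (c2, c) \<in> (arcs N)\<^sup>*" using comparable[OF \<open>c2 \<in> nodes N\<close>] by auto
  then show False
  proof
    assume "(c, c2) \<in> (arcs N)\<^sup>*"
    then have "(c, c2) \<in> (arcs N)\<^sup>+" using c2(2) rtranclD by metis
    then obtain p where p: "(c, p) \<in> (arcs N)\<^sup>*" "(p, c2) \<in> arcs N" using tranclD2 by metis
    have "(u, p) \<in> (arcs N)\<^sup>+" using c(1) p(1) by (meson rtrancl_into_trancl2)
    then show False using npp'[OF c2(1) p(2)] by auto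
  next
    assume "(c2, c) \<in> (arcs N)\<^sup>*"
    then have "(c2, c) \<in> (arcs N)\<^sup>+" using c2(2) rtranclD by metis
    then obtain p where p: "(c2, p) \<in> (arcs N)\<^sup>*" "(p, c) \<in> arcs N" using tranclD2 by metis
    have "(u, p) \<in> (arcs N)\<^sup>+" using c2(1) p(1) by (meson rtrancl_into_trancl2)
    then show False using npp'[OF c(1) p(2)] by auto
  qed
qed

lemma G:
  assumes "(u, v) \<in> (arcs N)\<^sup>+" "Cl N u \<subseteq> Cl N v" shows "is_hybrid N u \<and> (u, v) \<in> arcs N"
proof -
  have u: "u \<in> nodes N" using trancl_nodes assms(1) by auto
  have "\<not> is_tree_node N u" using G_tree assms by auto
  then have h: "is_hybrid N u" using tree_or_hybrid u by auto
  obtain c where c: "(u, c) \<in> arcs N" "(c, v) \<in> (arcs N)\<^sup>*" using tranclD assms(1) by metis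
  have ct: "is_tree_node N c" using hyb_child_tree h c(1) by auto
  show ?thesis
  proof (cases "c = v")
    case False
    then have "(c, v) \<in> (arcs N)\<^sup>+" using c(2) rtranclD by metis
    moreover have "Cl N c \<subseteq> Cl N v" using Cl_mono[of u c] c(1) assms(2) by auto
    ultimately show ?thesis using G_tree ct by auto
  qed (use h c in auto)
qed

lemma order_char:
  assumes "u \<in> nodes N" "w \<in> nodes N"
  shows "(u, w) \<in> (arcs N)\<^sup>* \<longleftrightarrow>
     (Cl N w \<subset> Cl N u \<or> (Cl N w = Cl N u \<and> (u = w \<or> is_hybrid N u)))"
proof
  assume a: "(u, w) \<in> (arcs N)\<^sup>*"
  then have s: "Cl N w \<subseteq> Cl N u" using Cl_mono by auto
  show "Cl N w \<subset> Cl N u \<or> (Cl N w = Cl N u \<and> (u = w \<or> is_hybrid N u))"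
  proof (cases "Cl N w = Cl N u \<and> u \<noteq> w")
    case True
    then have "(u, w) \<in> (arcs N)\<^sup>+" using a rtranclD by metis
    then show ?thesis using G True by auto
  qed (use s in auto)
next
  assume a: "Cl N w \<subset> Cl N u \<or> (Cl N w = Cl N u \<and> (u = w \<or> is_hybrid N u))"
  have cmp: "(u, w) \<in> (arcs N)\<^sup>* \<or> (w, u) \<in> (arcs N)\<^sup>*"
    using comparable[OF assms(2)] a by auto
  show "(u, w) \<in> (arcs N)\<^sup>*"
  proof (rule ccontr)
    assume n: "(u, w) \<notin> (arcs N)\<^sup>*"
    then have wu: "(w, u) \<in> (arcs N)\<^sup>*" "u \<noteq> w" using cmp by auto
    then have "Cl N u \<subseteq> Cl N w" using Cl_mono by auto
    then have e: "Cl N w = Cl N u" "is_hybrid N u" using a wu by auto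
    have "(w, u) \<in> (arcs N)\<^sup>+" using wu rtranclD by metis
    then have "is_hybrid N w \<and> (w, u) \<in> arcs N" using G e by auto
    then have "is_tree_node N u" using hyb_child_tree by auto
    then show False using e tree_not_hybrid by auto
  qed
qed

end


definition minsup :: "'s set set \<Rightarrow> 's set \<Rightarrow> 's set set" where
  "minsup F X = {Y \<in> F. X \<subset> Y \<and> (\<forall>Z\<in>F. X \<subset> Z \<longrightarrow> Z \<subseteq> Y \<longrightarrow> Z = Y)}"

lemma minsupD: "Y \<in> minsup F X \<Longrightarrow> Z \<in> F \<Longrightarrow> X \<subset> Z \<Longrightarrow> Z \<subseteq> Y \<Longrightarrow> Z = Y"
  unfolding minsup_def by simp

definition hybclus :: "'s set set \<Rightarrow> 's set \<Rightarrow> bool" where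
  "hybclus F X \<longleftrightarrow> (\<exists>Y1 Y2. Y1 \<in> minsup F X \<and> Y2 \<in> minsup F X \<and> Y1 \<noteq> Y2)"

definition Key :: "('v, 's) network \<Rightarrow> 'v \<Rightarrow> 's set \<times> bool" where
  "Key N v = (Cl N v, is_hybrid N v)"

fun R :: "'s set \<times> bool \<Rightarrow> 's set \<times> bool \<Rightarrow> bool" where
  "R (X, a) (Y, b) \<longleftrightarrow> (Y \<subset> X \<or> (Y = X \<and> (a \<or> \<not> b)))"

definition Rs where "Rs k l \<longleftrightarrow> R k l \<and> k \<noteq> l"

definition ArcK where "ArcK KS k l \<longleftrightarrow> Rs k l \<and> \<not> (\<exists>m\<in>KS. Rs k m \<and> Rs m l)"

definition keyset_of :: "'s set set \<Rightarrow> ('s set \<times> bool) set" where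
  "keyset_of F = {(X, False) | X. X \<in> F} \<union> {(X, True) | X. X \<in> F \<and> hybclus F X}"

context tcn begin

lemma key_inj: "inj_on (Key N) (nodes N)"
proof (rule inj_onI)
  fix u w assume uw: "u \<in> nodes N" "w \<in> nodes N" "Key N u = Key N w"
  then have e: "Cl N u = Cl N w" "is_hybrid N u = is_hybrid N w" by (auto simp: Key_def)
  show "u = w"
  proof (rule ccontr)
    assume "u \<noteq> w"
    then have "(u, w) \<in> (arcs N)\<^sup>+ \<or> (w, u) \<in> (arcs N)\<^sup>+"
      using comparable[OF uw(1)] e(1) rtranclD by (metis order_refl)
    then show False
    proof
      assume "(u, w) \<in> (arcs N)\<^sup>+"
      then have "is_hybrid N u \<and> (u, w) \<in> arcs N" using G e by auto
      then show False using hyb_child_tree tree_not_hybrid e by blast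
    next
      assume "(w, u) \<in> (arcs N)\<^sup>+"
      then have "is_hybrid N w \<and> (w, u) \<in> arcs N" using G e by auto
      then show False using hyb_child_tree tree_not_hybrid e by blast
    qed
  qed
qed

lemma order_key:
  assumes "u \<in> nodes N" "w \<in> nodes N"
  shows "(u, w) \<in> (arcs N)\<^sup>* \<longleftrightarrow> R (Key N u) (Key N w)"
proof -
  have "Cl N w = Cl N u \<Longrightarrow> u \<noteq> w \<Longrightarrow> is_hybrid N u \<noteq> is_hybrid N w"
    using key_inj assms by (auto simp: Key_def inj_on_def)
  then show ?thesis using order_char[OF assms] by (auto simp: Key_def)
qed

lemma trancl_key:
  assumes "u \<in> nodes N" "w \<in> nodes N"
  shows "(u, w) \<in> (arcs N)\<^sup>+ \<longleftrightarrow> Rs (Key N u) (Key N w)"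
proof -
  have "(u, w) \<in> (arcs N)\<^sup>+ \<longleftrightarrow> (u, w) \<in> (arcs N)\<^sup>* \<and> u \<noteq> w"
    using trancl_neq rtranclD trancl_into_rtrancl by metis
  also have "\<dots> \<longleftrightarrow> Rs (Key N u) (Key N w)"
    using order_key[OF assms] key_inj assms by (auto simp: Rs_def inj_on_def)
  finally show ?thesis .
qed

lemma arc_char:
  "(u, w) \<in> arcs N \<longleftrightarrow> u \<in> nodes N \<and> w \<in> nodes N \<and> (u, w) \<in> (arcs N)\<^sup>+ \<and>
     \<not> (\<exists>z. (u, z) \<in> (arcs N)\<^sup>+ \<and> (z, w) \<in> (arcs N)\<^sup>+)"
proof
  assume a: "(u, w) \<in> arcs N"
  have "\<not> (\<exists>z. (u, z) \<in> (arcs N)\<^sup>+ \<and> (z, w) \<in> (arcs N)\<^sup>+)"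
  proof
    assume "\<exists>z. (u, z) \<in> (arcs N)\<^sup>+ \<and> (z, w) \<in> (arcs N)\<^sup>+"
    then obtain z where z: "(u, z) \<in> (arcs N)\<^sup>+" "(z, w) \<in> (arcs N)\<^sup>+" by auto
    then obtain p where p: "(z, p) \<in> (arcs N)\<^sup>*" "(p, w) \<in> arcs N" using tranclD2 by metis
    have "(u, p) \<in> (arcs N)\<^sup>+" using z(1) p(1) by auto
    then show False using npp'[OF a p(2)] by auto
  qed
  then show "u \<in> nodes N \<and> w \<in> nodes N \<and> (u, w) \<in> (arcs N)\<^sup>+ \<and>
     \<not> (\<exists>z. (u, z) \<in> (arcs N)\<^sup>+ \<and> (z, w) \<in> (arcs N)\<^sup>+)" using a arc_nodes by auto
next
  assume a: "u \<in> nodes N \<and> w \<in> nodes N \<and> (u, w) \<in> (arcs N)\<^sup>+ \<and>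
     \<not> (\<exists>z. (u, z) \<in> (arcs N)\<^sup>+ \<and> (z, w) \<in> (arcs N)\<^sup>+)"
  then obtain p where p: "(u, p) \<in> (arcs N)\<^sup>*" "(p, w) \<in> arcs N" using tranclD2 by metis
  show "(u, w) \<in> arcs N"
  proof (cases "u = p")
    case False
    then have "(u, p) \<in> (arcs N)\<^sup>+" using p(1) rtranclD by metis
    then show ?thesis using a p(2) by auto
  qed (use p in auto)
qed

lemma arc_key:
  assumes "u \<in> nodes N" "w \<in> nodes N"
  shows "(u, w) \<in> arcs N \<longleftrightarrow> ArcK (Key N ` nodes N) (Key N u) (Key N w)"
proof -
  have "(\<exists>z. (u, z) \<in> (arcs N)\<^sup>+ \<and> (z, w) \<in> (arcs N)\<^sup>+) \<longleftrightarrow>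
        (\<exists>z\<in>nodes N. Rs (Key N u) (Key N z) \<and> Rs (Key N z) (Key N w))"
    using trancl_key assms trancl_nodes by meson
  then show ?thesis using arc_char[of u w] trancl_key[OF assms] assms
    by (auto simp: ArcK_def)
qed

lemma hyb_two_parents:
  assumes "is_hybrid N h" shows "\<exists>p1 p2. (p1, h) \<in> arcs N \<and> (p2, h) \<in> arcs N \<and> p1 \<noteq> p2"
proof -
  have "\<not> card (parents N h) \<le> Suc 0" using assms by (auto simp: is_hybrid_def indeg_def)
  then show ?thesis using card_le_Suc0_iff_eq[OF fin_parents] by (auto simp: parents_def)
qed

lemma parent_strict:
  assumes "(p, h) \<in> arcs N" "is_hybrid N h" shows "Cl N h \<subset> Cl N p"
proof -
  have s: "Cl N h \<subseteq> Cl N p" using Cl_mono assms(1) by auto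
  have "Cl N h \<noteq> Cl N p"
  proof
    assume "Cl N h = Cl N p"
    then have "is_hybrid N p \<and> (p, h) \<in> arcs N" using G assms(1) by auto
    then show False using hyb_child_tree tree_not_hybrid assms(2) by blast
  qed
  then show ?thesis using s by auto
qed

lemma hybclus_iff:
  assumes v: "v \<in> nodes N"
  shows "hybclus (Cl N ` nodes N) (Cl N v) \<longleftrightarrow> (\<exists>h\<in>nodes N. is_hybrid N h \<and> Cl N h = Cl N v)"
proof
  assume "\<exists>h\<in>nodes N. is_hybrid N h \<and> Cl N h = Cl N v"
  then obtain h where h: "h \<in> nodes N" "is_hybrid N h" "Cl N h = Cl N v" by auto
  obtain p1 p2 where p: "(p1, h) \<in> arcs N" "(p2, h) \<in> arcs N" "p1 \<noteq> p2"
    using hyb_two_parents[OF h(2)] by auto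
  have ms: "Cl N p \<in> minsup (Cl N ` nodes N) (Cl N h)" if pa: "(p, h) \<in> arcs N" for p
  proof -
    have "Cl N h \<subset> Cl N p" using parent_strict pa h(2) by auto
    moreover have "Z = Cl N p" if zz: "Z \<in> Cl N ` nodes N" "Cl N h \<subset> Z" "Z \<subseteq> Cl N p" for Z
    proof -
      obtain z where z: "z \<in> nodes N" "Z = Cl N z" using zz(1) by auto
      have "(z, h) \<in> (arcs N)\<^sup>*" using order_char[OF z(1) h(1)] zz(2) z(2) by auto
      moreover have "z \<noteq> h" using zz(2) z(2) by auto
      ultimately have "(z, h) \<in> (arcs N)\<^sup>+" using rtranclD by metis
      then obtain q where q: "(z, q) \<in> (arcs N)\<^sup>*" "(q, h) \<in> arcs N" using tranclD2 by metis
      have "Cl N q \<subseteq> Cl N p" using Cl_mono[OF q(1)] that(3) z(2) by auto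
      then have "(p, q) \<in> (arcs N)\<^sup>* \<or> (q, p) \<in> (arcs N)\<^sup>*"
        using comparable arc_nodes q(2) by blast
      then have "q = p"
        using npp'[OF pa q(2)] npp'[OF q(2) pa] rtranclD by metis
      then show ?thesis using Cl_mono[OF q(1)] that(3) z(2) by auto
    qed
    ultimately show ?thesis using pa arc_nodes unfolding minsup_def by auto
  qed
  have "Cl N p1 \<noteq> Cl N p2"
  proof
    assume "Cl N p1 = Cl N p2"
    then have "(p1, p2) \<in> (arcs N)\<^sup>* \<or> (p2, p1) \<in> (arcs N)\<^sup>*"
      using comparable arc_nodes p(1) by (metis order_refl)
    then show False using npp'[OF p(1) p(2)] npp'[OF p(2) p(1)] p(3) rtranclD by metis
  qed
  then show "hybclus (Cl N ` nodes N) (Cl N v)"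
    using ms p h(3) unfolding hybclus_def by metis
next
  assume hc: "hybclus (Cl N ` nodes N) (Cl N v)"
  show "\<exists>h\<in>nodes N. is_hybrid N h \<and> Cl N h = Cl N v"
  proof (rule ccontr)
    assume nh: "\<not> ?thesis"
    then have vt: "is_tree_node N v" using v tree_or_hybrid by auto
    have eq: "Y = Cl N p" if yy: "Y \<in> minsup (Cl N ` nodes N) (Cl N v)" "(p, v) \<in> arcs N" for Y p
    proof -
      have yF: "Y \<in> Cl N ` nodes N" and yX: "Cl N v \<subset> Y" using yy(1) unfolding minsup_def by simp_all
      obtain y where y: "y \<in> nodes N" "Y = Cl N y" using yF by blast
      note y = y yX
      have "(y, v) \<in> (arcs N)\<^sup>*" using order_char[OF y(1) v] y by auto
      moreover have "y \<noteq> v" using y by auto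
      ultimately have "(y, v) \<in> (arcs N)\<^sup>+" using rtranclD by metis
      then obtain q where q: "(y, q) \<in> (arcs N)\<^sup>*" "(q, v) \<in> arcs N" using tranclD2 by metis
      have qp: "q = p" using tree_parent[OF vt q(2) yy(2)] .
      have sub: "Cl N v \<subseteq> Cl N p" using Cl_mono yy(2) by auto
      have "Cl N v \<noteq> Cl N p"
      proof
        assume "Cl N v = Cl N p"
        moreover have "(p, v) \<in> (arcs N)\<^sup>+" using yy(2) by (rule r_into_trancl)
        ultimately have "is_hybrid N p" using G[of p v] by simp
        moreover have "p \<in> nodes N" using arc_nodes yy(2) by blast
        ultimately show False using nh \<open>Cl N v = Cl N p\<close> by blast
      qed
      then have f1: "Cl N v \<subset> Cl N p" using sub by auto
      have f2: "Cl N p \<subseteq> Y" using Cl_mono[OF q(1)] qp y(2) by auto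
      have f3: "Cl N p \<in> Cl N ` nodes N" using arc_nodes yy(2) by auto
      have "Cl N p = Y" using minsupD[OF yy(1) f3 f1 f2] .
      then show ?thesis by simp
    qed
    obtain Y1 Y2 where Y: "Y1 \<in> minsup (Cl N ` nodes N) (Cl N v)"
      "Y2 \<in> minsup (Cl N ` nodes N) (Cl N v)" "Y1 \<noteq> Y2"
      using hc unfolding hybclus_def by auto
    have "v \<noteq> root N"
    proof
      assume "v = root N"
      have "Cl N v \<subset> Y1" "Y1 \<in> Cl N ` nodes N" using Y(1) unfolding minsup_def by simp_all
      then show False using Cl_sub Cl_root \<open>v = root N\<close> by blast
    qed
    then obtain p where "(p, v) \<in> arcs N" using has_parent v by auto
    then show False using eq[OF Y(1)] eq[OF Y(2)] Y(3) by simp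
  qed
qed

lemma tree_witness:
  assumes v: "v \<in> nodes N" shows "\<exists>t\<in>nodes N. \<not> is_hybrid N t \<and> Cl N t = Cl N v"
proof (cases "is_hybrid N v")
  case True
  obtain c where c: "children N v = {c}" "is_tree_node N c" using hyb_child[OF True] by auto
  have vc: "(v, c) \<in> arcs N" using c(1) by (auto simp: children_def)
  have "Cl N v \<subseteq> Cl N c"
  proof
    fix s assume "s \<in> Cl N v"
    then obtain y where y: "y \<in> leaves N" "(v, y) \<in> (arcs N)\<^sup>*" "s = lbl N y"
      unfolding Cl_def by auto
    have "v \<noteq> y" using y(1) vc by (auto simp: leaf_iff)
    then have "(v, y) \<in> (arcs N)\<^sup>+" using y(2) rtranclD by metis
    then obtain c' where c': "(v, c') \<in> arcs N" "(c', y) \<in> (arcs N)\<^sup>*" using tranclD by metis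
    have "c' = c" using c' c(1) by (auto simp: children_def)
    then show "s \<in> Cl N c" using c' y leaf_in_Cl by auto
  qed
  then have "Cl N c = Cl N v" using Cl_mono vc by auto
  then show ?thesis using c(2) tree_not_hybrid arc_nodes vc by blast
qed (use v in auto)

lemma keyset: "Key N ` nodes N = keyset_of (Cl N ` nodes N)"
proof
  show "Key N ` nodes N \<subseteq> keyset_of (Cl N ` nodes N)"
  proof
    fix k assume "k \<in> Key N ` nodes N"
    then obtain v where v: "v \<in> nodes N" "k = Key N v" by auto
    show "k \<in> keyset_of (Cl N ` nodes N)"
    proof (cases "is_hybrid N v")
      case True
      then have "hybclus (Cl N ` nodes N) (Cl N v)" using hybclus_iff v(1) by auto
      then show ?thesis using v True by (auto simp: keyset_of_def Key_def)
    qed (use v in \<open>auto simp: keyset_of_def Key_def\<close>)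
  qed
next
  show "keyset_of (Cl N ` nodes N) \<subseteq> Key N ` nodes N"
  proof
    fix k assume k: "k \<in> keyset_of (Cl N ` nodes N)"
    then obtain v b where v: "v \<in> nodes N" "k = (Cl N v, b)" "b \<longrightarrow> hybclus (Cl N ` nodes N) (Cl N v)"
      unfolding keyset_of_def by auto
    show "k \<in> Key N ` nodes N"
    proof (cases b)
      case True
      then obtain h where "h\<in>nodes N" "is_hybrid N h" "Cl N h = Cl N v" using hybclus_iff v by auto
      then show ?thesis using v True by (auto simp: Key_def image_iff)
    next
      case False
      then obtain t where "t\<in>nodes N" "\<not> is_hybrid N t" "Cl N t = Cl N v" using tree_witness v by auto
      then show ?thesis using v False by (auto simp: Key_def image_iff)
    qed
  qed
qed

lemma clusters_pi: "Cl N ` nodes N = insert S (fst ` arc_invariant (pi_arc S N) N)"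
proof -
  have "fst ` arc_invariant (pi_arc S N) N = Cl N ` snd ` arcs N"
    by (auto simp: arc_invariant_def pi_arc_def image_image)
  then show ?thesis using nodes_eq Cl_root by (metis image_insert)
qed

end


lemma sep_pi:
  fixes S :: "'s set" and N1 :: "('v, 's) network" and N2 :: "('w, 's) network"
  assumes t1: "tcn S N1" and t2: "tcn S N2"
    and eq: "arc_invariant (pi_arc S N1) N1 = arc_invariant (pi_arc S N2) N2"
  shows "net_iso N1 N2"
proof -
  interpret A: tcn S N1 by (rule t1)
  interpret B: tcn S N2 by (rule t2)
  let ?V1 = "nodes N1" and ?V2 = "nodes N2" and ?K1 = "Key N1" and ?K2 = "Key N2"
  have KS: "?K1 ` ?V1 = ?K2 ` ?V2"
    using A.keyset B.keyset A.clusters_pi B.clusters_pi eq by simp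
  define f where "f v = inv_into ?V2 ?K2 (?K1 v)" for v
  have fV: "f v \<in> ?V2" and fK: "?K2 (f v) = ?K1 v" if "v \<in> ?V1" for v
  proof -
    have "?K1 v \<in> ?K2 ` ?V2" using that KS by (metis imageI)
    then show "f v \<in> ?V2" "?K2 (f v) = ?K1 v" unfolding f_def by (auto intro: inv_into_into f_inv_into_f)
  qed
  have bij: "bij_betw f ?V1 ?V2"
  proof (rule bij_betw_imageI)
    show "inj_on f ?V1"
    proof (rule inj_onI)
      fix u v assume "u \<in> ?V1" "v \<in> ?V1" "f u = f v"
      then have "?K1 u = ?K1 v" using fK by metis
      then show "u = v" using A.key_inj \<open>u \<in> ?V1\<close> \<open>v \<in> ?V1\<close> by (auto dest: inj_onD)
    qed
    show "f ` ?V1 = ?V2"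
    proof
      show "f ` ?V1 \<subseteq> ?V2" using fV by auto
      show "?V2 \<subseteq> f ` ?V1"
      proof
        fix w assume w: "w \<in> ?V2"
        then obtain v where v: "v \<in> ?V1" "?K1 v = ?K2 w" using KS by (metis imageE imageI)
        then have "f v = w" using fV fK B.key_inj w by (metis inj_onD)
        then show "w \<in> f ` ?V1" using v by auto
      qed
    qed
  qed
  have arcs: "(u, w) \<in> arcs N1 \<longleftrightarrow> (f u, f w) \<in> arcs N2" if "u \<in> ?V1" "w \<in> ?V1" for u w
    using A.arc_key[OF that] B.arc_key[OF fV[OF that(1)] fV[OF that(2)]] fK that KS by simp
  have lbls: "lbl N2 (f x) = lbl N1 x" if x: "x \<in> leaves N1" for x
  proof -
    have xV: "x \<in> ?V1" using x by (simp add: leaves_def)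
    have "f x \<in> leaves N2"
      unfolding B.leaf_iff
    proof (intro conjI allI)
      show "f x \<in> ?V2" using fV xV by auto
      fix w' show "(f x, w') \<notin> arcs N2"
      proof
        assume a: "(f x, w') \<in> arcs N2"
        then have "w' \<in> ?V2" using B.arc_nodes by auto
        then obtain w where "w \<in> ?V1" "f w = w'" using bij unfolding bij_betw_def by (metis imageE)
        then have "(x, w) \<in> arcs N1" using arcs xV a by auto
        then show False using x A.leaf_iff by auto
      qed
    qed
    then have "{lbl N2 (f x)} = Cl N2 (f x)" using B.Cl_leaf by auto
    also have "\<dots> = Cl N1 x" using fK[OF xV] by (simp add: Key_def)
    also have "\<dots> = {lbl N1 x}" using A.Cl_leaf x by auto
    finally show ?thesis by simp
  qed
  show ?thesis unfolding net_iso_def using bij arcs lbls by blast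
qed

lemma pi_from:
  fixes S :: "'s set" and N :: "('v, 's) network" and g :: "'a \<Rightarrow> 's set \<times> 's set"
  assumes "tcn S N" "\<And>e. pi_arc S N e = g (F e)"
  shows "arc_invariant (pi_arc S N) N = g ` arc_invariant F N"
  using assms(2) by (auto simp: arc_invariant_def image_image)



definition gpi :: "'s set \<Rightarrow> 'a \<times> 'b \<times> 's set \<Rightarrow> 's set \<times> 's set" where
  "gpi S t = (S - snd (snd t), snd (snd t))"

definition gpsi :: "'s set \<Rightarrow> ('a \<times> 'b \<times> 's set) + (('c \<times> 'd \<times> 's set) \<times> 'e) \<Rightarrow> 's set \<times> 's set" where
  "gpsi S x = (case x of Inl t \<Rightarrow> gpi S t | Inr p \<Rightarrow> gpi S (fst p))"

lemma (in tcn) pi_eqs: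
  "pi_arc S N e = gpi S (theta_arc S N e)"
  "pi_arc S N e = gpi S (thetaB_arc S N e)"
  "pi_arc S N e = gpi S (thetaAB_arc S N e)"
  "pi_arc S N e = gpsi S (Psi_arc S N e)"
  using Cl_sub[of "snd e"]
  by (auto simp: pi_arc_def theta_arc_def thetaB_arc_def thetaAB_arc_def Psi_arc_def gpi_def gpsi_def
      double_diff)

theorem corollary9:
  fixes S :: "'s set" and N1 :: "('v, 's) network" and N2 :: "('w, 's) network"
  assumes "finite S"
    and "tree_child_network S N1" and "no_parent_paths N1"
    and "tree_child_network S N2" and "no_parent_paths N2"
  shows "(arc_invariant (pi_arc S N1) N1 = arc_invariant (pi_arc S N2) N2 \<longrightarrow> net_iso N1 N2)
       \<and> (arc_invariant (theta_arc S N1) N1 = arc_invariant (theta_arc S N2) N2 \<longrightarrow> net_iso N1 N2)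
       \<and> (arc_invariant (thetaB_arc S N1) N1 = arc_invariant (thetaB_arc S N2) N2 \<longrightarrow> net_iso N1 N2)
       \<and> (arc_invariant (thetaAB_arc S N1) N1 = arc_invariant (thetaAB_arc S N2) N2 \<longrightarrow> net_iso N1 N2)
       \<and> (arc_invariant (Psi_arc S N1) N1 = arc_invariant (Psi_arc S N2) N2 \<longrightarrow> net_iso N1 N2)"
proof -
  have t1: "tcn S N1" using assms by (simp add: tcn_def)
  have t2: "tcn S N2" using assms by (simp add: tcn_def)
  note sep = sep_pi[OF t1 t2]
  have p1: "arc_invariant (pi_arc S N1) N1 = gpi S ` arc_invariant (theta_arc S N1) N1"
    "arc_invariant (pi_arc S N1) N1 = gpi S ` arc_invariant (thetaB_arc S N1) N1"
    "arc_invariant (pi_arc S N1) N1 = gpi S ` arc_invariant (thetaAB_arc S N1) N1"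
    "arc_invariant (pi_arc S N1) N1 = gpsi S ` arc_invariant (Psi_arc S N1) N1"
    using tcn.pi_eqs[OF t1] by (auto simp: arc_invariant_def image_image)
  have p2: "arc_invariant (pi_arc S N2) N2 = gpi S ` arc_invariant (theta_arc S N2) N2"
    "arc_invariant (pi_arc S N2) N2 = gpi S ` arc_invariant (thetaB_arc S N2) N2"
    "arc_invariant (pi_arc S N2) N2 = gpi S ` arc_invariant (thetaAB_arc S N2) N2"
    "arc_invariant (pi_arc S N2) N2 = gpsi S ` arc_invariant (Psi_arc S N2) N2"
    using tcn.pi_eqs[OF t2] by (auto simp: arc_invariant_def image_image)
  show ?thesis using sep p1 p2 by metis
qed


end
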